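(* Let $\alpha\in(1,2)$, $\sigma=1-\alpha/2$, $\tau>0$, let $k\ge1$ be an integer and let $c_l^{(k,\alpha)}$ ($0\le l\le k$) be as defined in the context. For any grid functions $u^0,u^1,\dots,u^{k+1}\in\mathring{\mathcal{U}}_h$, $$\sum_{l=0}^{k-1}c_l^{(k,\alpha)}\Big(\delta_tu^{k-l+\frac12}-\delta_tu^{k-l-\frac12},\ \big(\tfrac12+\sigma\big)\delta_tu^{k+\frac12}+\big(\tfrac12-\sigma\big)\delta_tu^{k-\frac12}\Big)\ \ge\ \frac12\sum_{l=0}^{k-1}c_l^{(k,\alpha)}\Big(\|\delta_tu^{k-l+\frac12}\|^2-\|\delta_tu^{k-l-\frac12}\|^2\Big).$$
   Context: Let $L>0$, $M$ a positive integer, $h=L/M$. $\mathring{\mathcal{U}}_h=\{u=(u_0,\dots,u_M): u_0=u_M=0\}$, with inner product $(u,v)=h\sum_{i=1}^{M-1}u_iv_i$ and $\|u\|=\sqrt{(u,u)}$. For grid functions $u^j$, $\delta_tu^{j+\frac12}=(u^{j+1}-u^j)/\tau$. Coefficients: for $k\ge1$, $a_1^{(k,\alpha)}=\frac32\tau^{2-\alpha}\int_0^{1/2}(s-\frac13)(k+\sigma-s)^{1-\alpha}\,\mathrm{d}s$; $a_l^{(k,\alpha)}=\tau^{2-\alpha}\int_0^1(s-\frac12)(k+\sigma-l+\frac32-s)^{1-\alpha}\,\mathrm{d}s$ for $2\le l\le k$; $b_l^{(k,\alpha)}=\tau^{2-\alpha}\int_0^1(\frac32-s)(k+\sigma-l+\frac12-s)^{1-\alpha}\,\mathrm{d}s$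 for $1\le l\le k-1$; $b_k^{(k,\alpha)}=\tau^{2-\alpha}\int_0^{\sigma+1/2}s^{1-\alpha}\,\mathrm{d}s$; $c_l^{(k,\alpha)}=a_{k-l}^{(k,\alpha)}+b_{k-l}^{(k,\alpha)}$ for $0\le l\le k-1$, and $c_k^{(k,\alpha)}=\frac32\tau^{2-\alpha}\int_0^{1/2}(1-s)(k+\sigma-s)^{1-\alpha}\,\mathrm{d}s$. *)

theory Defs
  imports "HOL-Analysis.Analysis"
begin

definition coef_a :: "real \<Rightarrow> real \<Rightarrow> real \<Rightarrow> nat \<Rightarrow> nat \<Rightarrow> real" where
  "coef_a \<alpha> \<sigma> \<tau> k l =
     (if l = 1 then
        3/2 * \<tau> powr (2 - \<alpha>) *
          integral {0..1/2} (\<lambda>s. (s - 1/3) * (real k + \<sigma> - s) powr (1 - \<alpha>))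
      else
        \<tau> powr (2 - \<alpha>) *
          integral {0..1} (\<lambda>s. (s - 1/2) * (real k + \<sigma> - real l + 3/2 - s) powr (1 - \<alpha>)))"

definition coef_b :: "real \<Rightarrow> real \<Rightarrow> real \<Rightarrow> nat \<Rightarrow> nat \<Rightarrow> real" where
  "coef_b \<alpha> \<sigma> \<tau> k l =
     (if l = k then
        \<tau> powr (2 - \<alpha>) * integral {0..\<sigma> + 1/2} (\<lambda>s. s powr (1 - \<alpha>))
      else
        \<tau> powr (2 - \<alpha>) *
          integral {0..1} (\<lambda>s. (3/2 - s) * (real k + \<sigma> - real l + 1/2 - s) powr (1 - \<alpha>)))"

definition coef_c :: "real \<Rightarrow> real \<Rightarrow> real \<Rightarrow> nat \<Rightarrow> nat \<Rightarrow> real" where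
  "coef_c \<alpha> \<sigma> \<tau> k l =
     (if l < k then coef_a \<alpha> \<sigma> \<tau> k (k - l) + coef_b \<alpha> \<sigma> \<tau> k (k - l)
      else 3/2 * \<tau> powr (2 - \<alpha>) *
          integral {0..1/2} (\<lambda>s. (1 - s) * (real k + \<sigma> - s) powr (1 - \<alpha>)))"

text \<open>Grid functions: u :: nat \<Rightarrow> real indexed by 0..M; inner product h * sum over interior.\<close>

definition grid_inner :: "real \<Rightarrow> nat \<Rightarrow> (nat \<Rightarrow> real) \<Rightarrow> (nat \<Rightarrow> real) \<Rightarrow> real" where
  "grid_inner h M u v = h * (\<Sum>i = 1..M - 1. u i * v i)"

definition grid_norm :: "real \<Rightarrow> nat \<Rightarrow> (nat \<Rightarrow> real) \<Rightarrow> real" where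
  "grid_norm h M u = sqrt (grid_inner h M u u)"

text \<open>delta_t u^{j+1/2} = (u^{j+1} - u^j)/tau, time levels u j.\<close>
definition delta_t :: "real \<Rightarrow> (nat \<Rightarrow> nat \<Rightarrow> real) \<Rightarrow> nat \<Rightarrow> nat \<Rightarrow> real" where
  "delta_t \<tau> u j = (\<lambda>i. (u (Suc j) i - u j i) / \<tau>)"

end

theory Submission
  imports Defs
begin


lemma int_lin:
  fixes a b c d :: real
  assumes "a \<le> b" "\<And>s. f s = c * s + d"
  shows "integral {a..b} f = c * (b\<^sup>2 - a\<^sup>2) / 2 + d * (b - a)"
proof -
  have k: "((\<lambda>s. d) has_integral d * (b - a)) {a..b}"
    using has_integral_const_real[of d a b] assms(1) by (simp add: mult.commute)
  have "((\<lambda>s. c * s + d) has_integral (c * ((b\<^sup>2 - a\<^sup>2) / 2) + d * (b - a))) {a..b}"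
    using assms(1)
    by (intro has_integral_add has_integral_mult_right ident_has_integral k)
  moreover have "f = (\<lambda>s. c * s + d)" using assms(2) by auto
  ultimately show ?thesis by (simp add: integral_unique)
qed

lemma int_mono:
  fixes f g :: "real \<Rightarrow> real"
  assumes "continuous_on {a..b} f" "continuous_on {a..b} g" "\<And>s. s \<in> {a..b} \<Longrightarrow> f s \<le> g s"
  shows "integral {a..b} f \<le> integral {a..b} g"
  using assms by (intro integral_le integrable_continuous_interval) auto

lemma cont_pw:
  fixes A B \<beta> a b :: real
  assumes "A - b > 0"
  shows "continuous_on {a..b} (\<lambda>s. (s - B) * (A - s) powr \<beta>)"
  using assms by (intro continuous_intros) auto

lemma cont_pw2:
  fixes A B \<beta> a b :: real
  assumes "A - b > 0"
  shows "continuous_on {a..b} (\<lambda>s. (B - s) * (A - s) powr \<beta>)"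
  using assms by (intro continuous_intros) auto

lemma cont_lin: "continuous_on {a..b} (\<lambda>s::real. c * s + (d::real))"
  by (intro continuous_intros)

lemma pw_dec: "\<beta> \<le> 0 \<Longrightarrow> 0 < u \<Longrightarrow> u \<le> v \<Longrightarrow> v powr \<beta> \<le> u powr (\<beta>::real)"
  by (rule powr_mono2')

lemma pw_pos: "0 < u \<Longrightarrow> 0 < u powr (\<beta>::real)"
  by simp

lemma pw_midconv:
  fixes u \<beta> :: real
  assumes "u > 0" "\<beta> \<le> 0"
  shows "2 * (u + 1) powr \<beta> \<le> u powr \<beta> + (u + 2) powr \<beta>"
proof -
  define a where "a = u powr \<beta>"
  define b where "b = (u + 2) powr \<beta>"
  define m where "m = (u + 1) powr \<beta>"
  have ab: "a * b = (u * (u + 2)) powr \<beta>" unfolding a_def b_def by (simp only: powr_mult)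
  have mm: "m * m = ((u + 1) * (u + 1)) powr \<beta>" unfolding m_def by (simp only: powr_mult)
  have p: "0 < u * (u + 2)" using assms by simp
  have q: "u * (u + 2) \<le> (u + 1) * (u + 1)" by (simp add: algebra_simps)
  have "((u + 1) * (u + 1)) powr \<beta> \<le> (u * (u + 2)) powr \<beta>" using powr_mono2'[OF assms(2) p q] .
  hence 1: "m * m \<le> a * b" by (simp only: ab mm)
  have "a > 0" "b > 0" unfolding a_def b_def using assms by auto
  have 2: "(a + b)^2 - 4 * a * b = (a - b)^2" by (simp add: power2_eq_square algebra_simps)
  have 3: "0 \<le> (a - b)^2" by simp
  have 4: "(2 * m)^2 = 4 * (m * m)" by (simp add: power2_eq_square)
  have 5: "(2 * m)^2 \<le> (a + b)^2" using 1 2 3 4 by linarith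
  have 6: "0 \<le> a + b" using \<open>a > 0\<close> \<open>b > 0\<close> by linarith
  have "2 * m \<le> a + b" by (rule power2_le_imp_le[OF 5 6])
  thus ?thesis unfolding a_def b_def m_def .
qed

lemma pw_bern:
  fixes u \<beta> :: real
  assumes "u \<ge> 1" "\<beta> \<le> 0"
  shows "u powr \<beta> - (u + 1) powr \<beta> \<le> - \<beta>"
proof -
  have up: "u > 0" using assms by simp
  have e: "u + 1 = u * (1 + 1/u)" using up by (simp add: field_simps)
  have "(1 + 1/u) powr \<beta> = exp (\<beta> * ln (1 + 1/u))"
  proof -
    have "1/u > 0" using up by simp
    hence "1 + 1/u > 0" by linarith
    thus ?thesis by (simp add: powr_def)
  qed
  also have "\<dots> \<ge> 1 + \<beta> * ln (1 + 1/u)" by (rule exp_ge_add_one_self)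
  finally have h1: "(1 + 1/u) powr \<beta> \<ge> 1 + \<beta> * ln (1 + 1/u)" .
  have "ln (1 + 1/u) \<le> 1/u" using up by (intro ln_add_one_self_le_self) simp
  hence "\<beta> * ln (1 + 1/u) \<ge> \<beta> * (1/u)" using mult_left_mono_neg[OF _ assms(2)] by blast
  with h1 have h2: "(1 + 1/u) powr \<beta> \<ge> 1 + \<beta> / u" by simp
  have "(u + 1) powr \<beta> = u powr \<beta> * (1 + 1/u) powr \<beta>" by (subst e) (simp add: powr_mult)
  hence "u powr \<beta> - (u + 1) powr \<beta> = u powr \<beta> * (1 - (1 + 1/u) powr \<beta>)" by (simp add: algebra_simps)
  also have "\<dots> \<le> u powr \<beta> * (- \<beta> / u)"
    using h2 up by (intro mult_left_mono) auto
  also have "u powr \<beta> \<le> 1" using assms powr_mono2'[of \<beta> 1 u] by simp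
  hence "u powr \<beta> * (- \<beta> / u) \<le> 1 * (- \<beta> / u)"
    using assms up by (intro mult_right_mono) (auto simp: divide_nonpos_pos)
  also have "- \<beta> / u \<le> - \<beta> / 1" using assms up by (intro divide_left_mono) auto
  finally show ?thesis by simp
qed



lemma pt:
  fixes s m y \<beta> :: real
  assumes "\<beta> \<le> 0" "0 < y - s" "0 < y - m"
  shows "(s - m) * (y - m) powr \<beta> \<le> (s - m) * (y - s) powr \<beta>"
proof (cases "s \<le> m")
  case True
  have "(y - s) powr \<beta> \<le> (y - m) powr \<beta>" using assms True by (intro powr_mono2') auto
  thus ?thesis using True by (intro mult_left_mono_neg) auto
next
  case False
  have "(y - m) powr \<beta> \<le> (y - s) powr \<beta>" using assms False by (intro powr_mono2') auto
  thus ?thesis using False by (intro mult_left_mono) auto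
qed

lemma ar1:
  fixes s Fs F0 F1 :: real
  assumes "0 \<le> s" "s \<le> 1" "F0 \<le> Fs" "Fs \<le> F1"
  shows "(s - 1/2) * Fs \<le> (s - 1/2) * F0 + (s/2) * (F1 - F0)"
proof (cases "s \<le> 1/2")
  case True
  have "(s - 1/2) * (Fs - F0) \<le> 0" using True assms by (intro mult_nonpos_nonneg) auto
  moreover have "0 \<le> (s/2) * (F1 - F0)" using assms by (intro mult_nonneg_nonneg) auto
  moreover have "(s - 1/2) * Fs = (s - 1/2) * F0 + (s - 1/2) * (Fs - F0)" by (simp add: field_simps)
  ultimately show ?thesis by linarith
next
  case False
  have "(s - 1/2) * (Fs - F0) \<le> (s - 1/2) * (F1 - F0)" using False assms by (intro mult_left_mono) auto
  moreover have "(s - 1/2) * (F1 - F0) \<le> (s/2) * (F1 - F0)" using False assms by (intro mult_right_mono) auto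
  moreover have "(s - 1/2) * Fs = (s - 1/2) * F0 + (s - 1/2) * (Fs - F0)" by (simp add: field_simps)
  ultimately show ?thesis by linarith
qed

lemma ar2:
  fixes s Fs F0 F1 :: real
  assumes "0 \<le> s" "s \<le> 1/2" "F0 \<le> Fs" "Fs \<le> F1"
  shows "(s - 1/3) * Fs \<le> (s - 1/3) * F0 + (s/3) * (F1 - F0)"
proof (cases "s \<le> 1/3")
  case True
  have "(s - 1/3) * (Fs - F0) \<le> 0" using True assms by (intro mult_nonpos_nonneg) auto
  moreover have "0 \<le> (s/3) * (F1 - F0)" using assms by (intro mult_nonneg_nonneg) auto
  moreover have "(s - 1/3) * Fs = (s - 1/3) * F0 + (s - 1/3) * (Fs - F0)" by (simp add: field_simps)
  ultimately show ?thesis by linarith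
next
  case False
  have "(s - 1/3) * (Fs - F0) \<le> (s - 1/3) * (F1 - F0)" using False assms by (intro mult_left_mono) auto
  moreover have "(s - 1/3) * (F1 - F0) \<le> (s/3) * (F1 - F0)" using False assms by (intro mult_right_mono) auto
  moreover have "(s - 1/3) * Fs = (s - 1/3) * F0 + (s - 1/3) * (Fs - F0)" by (simp add: field_simps)
  ultimately show ?thesis by linarith
qed

lemma ar3:
  fixes s D1 D2 :: real
  assumes "0 \<le> s" "s \<le> 1" "0 \<le> D2" "D2 \<le> D1"
  shows "0 \<le> (s - 1/2) * D2 + (3/2 - s) * D1"
proof -
  have "0 \<le> (3/2 - s) * (D1 - D2)" using assms by (intro mult_nonneg_nonneg) auto
  moreover have "(s - 1/2) * D2 + (3/2 - s) * D1 = D2 + (3/2 - s) * (D1 - D2)" by (simp add: field_simps)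
  ultimately show ?thesis using assms by linarith
qed

lemma IA_ge:
  fixes y \<beta> :: real
  assumes "y > 1" "\<beta> \<le> 0"
  shows "0 \<le> integral {0..1} (\<lambda>s. (s - 1/2) * (y - s) powr \<beta>)"
proof -
  have "integral {0..1} (\<lambda>s. (s - 1/2) * (y - 1/2) powr \<beta>) \<le> integral {0..1} (\<lambda>s. (s - 1/2) * (y - s) powr \<beta>)"
    using assms by (intro int_mono cont_pw continuous_intros pt) auto
  moreover have "integral {0..1} (\<lambda>s. (s - 1/2) * (y - 1/2) powr \<beta>) = 0"
    by (subst int_lin[where c = "(y - 1/2) powr \<beta>" and d = "- ((y - 1/2) powr \<beta>) / 2"]) (auto simp: field_simps)
  ultimately show ?thesis by linarith
qed

lemma IA_le:
  fixes y \<beta> :: real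
  assumes "y > 1" "\<beta> \<le> 0"
  shows "integral {0..1} (\<lambda>s. (s - 1/2) * (y - s) powr \<beta>) \<le> ((y - 1) powr \<beta> - y powr \<beta>) / 4"
proof -
  let ?F0 = "y powr \<beta>" and ?F1 = "(y - 1) powr \<beta>"
  have "integral {0..1} (\<lambda>s. (s - 1/2) * (y - s) powr \<beta>) \<le>
        integral {0..1} (\<lambda>s. (s - 1/2) * ?F0 + (s/2) * (?F1 - ?F0))"
  proof (intro int_mono cont_pw continuous_intros)
    fix s :: real assume s: "s \<in> {0..1}"
    show "(s - 1/2) * (y - s) powr \<beta> \<le> (s - 1/2) * ?F0 + (s/2) * (?F1 - ?F0)"
      using s assms by (intro ar1 powr_mono2') auto
  qed (use assms in auto)
  moreover have "integral {0..1} (\<lambda>s. (s - 1/2) * ?F0 + (s/2) * (?F1 - ?F0)) = (?F1 - ?F0) / 4"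
    by (subst int_lin[where c = "?F0 + (?F1 - ?F0)/2" and d = "- ?F0 / 2"]) (auto simp: field_simps)
  ultimately show ?thesis by linarith
qed

lemma half_pw_le2:
  fixes b \<beta> :: real
  assumes "b \<ge> 1/2" "-1 \<le> \<beta>" "\<beta> \<le> 0"
  shows "b powr \<beta> \<le> 2"
proof -
  have "b powr \<beta> \<le> (1/2) powr \<beta>" using assms by (intro powr_mono2') auto
  also have "\<dots> \<le> (1/2) powr (-1)" using assms by (intro powr_mono') auto
  also have "\<dots> = 2" by (simp add: powr_minus)
  finally show ?thesis .
qed

lemma IA1_le:
  fixes x \<beta> :: real
  assumes "x \<ge> 1" "\<beta> \<le> 0" "-1 \<le> \<beta>"
  shows "integral {0..1/2} (\<lambda>s. (s - 1/3) * (x - s) powr \<beta>) \<le> 0"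
proof -
  let ?F0 = "x powr \<beta>" and ?F1 = "(x - 1/2) powr \<beta>"
  have "integral {0..1/2} (\<lambda>s. (s - 1/3) * (x - s) powr \<beta>) \<le>
        integral {0..1/2} (\<lambda>s. (s - 1/3) * ?F0 + (s/3) * (?F1 - ?F0))"
  proof (intro int_mono cont_pw continuous_intros)
    fix s :: real assume s: "s \<in> {0..1/2}"
    show "(s - 1/3) * (x - s) powr \<beta> \<le> (s - 1/3) * ?F0 + (s/3) * (?F1 - ?F0)"
      using s assms by (intro ar2 powr_mono2') auto
  qed (use assms in auto)
  moreover have "integral {0..1/2} (\<lambda>s. (s - 1/3) * ?F0 + (s/3) * (?F1 - ?F0)) = (?F1 - 2 * ?F0) / 24"
    by (subst int_lin[where c = "?F0 + (?F1 - ?F0)/3" and d = "- ?F0 / 3"]) (auto simp: field_simps power2_eq_square)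
  moreover have "?F1 \<le> 2 * ?F0"
  proof -
    have "?F1 \<le> (x * (1/2)) powr \<beta>" using assms by (intro powr_mono2') auto
    also have "\<dots> = ?F0 * (1/2) powr \<beta>" by (simp only: powr_mult)
    also have "\<dots> \<le> ?F0 * 2" using assms half_pw_le2[of "1/2" \<beta>] by (intro mult_left_mono) auto
    finally show ?thesis by simp
  qed
  hence "?F1 - 2 * ?F0 \<le> 0" by linarith
  hence "(?F1 - 2 * ?F0) / 24 \<le> 0" by (rule divide_nonpos_pos) simp
  ultimately show ?thesis by linarith
qed

lemma IA1_ge:
  fixes x \<beta> :: real
  assumes "x > 1/2" "\<beta> \<le> 0"
  shows "- ((x - 1/3) powr \<beta>) / 24 \<le> integral {0..1/2} (\<lambda>s. (s - 1/3) * (x - s) powr \<beta>)"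
proof -
  have "integral {0..1/2} (\<lambda>s. (s - 1/3) * (x - 1/3) powr \<beta>) \<le> integral {0..1/2} (\<lambda>s. (s - 1/3) * (x - s) powr \<beta>)"
    using assms by (intro int_mono cont_pw continuous_intros pt) auto
  moreover have "integral {0..1/2} (\<lambda>s. (s - 1/3) * (x - 1/3) powr \<beta>) = - ((x - 1/3) powr \<beta>) / 24"
    by (subst int_lin[where c = "(x - 1/3) powr \<beta>" and d = "- ((x - 1/3) powr \<beta>) / 3"]) (auto simp: field_simps power2_eq_square)
  ultimately show ?thesis by linarith
qed

lemma IB_le:
  fixes y \<beta> :: real
  assumes "y > 1" "\<beta> \<le> 0"
  shows "integral {0..1} (\<lambda>s. (3/2 - s) * (y - s) powr \<beta>) \<le> (y - 1) powr \<beta>"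
proof -
  have "integral {0..1} (\<lambda>s. (3/2 - s) * (y - s) powr \<beta>) \<le> integral {0..1} (\<lambda>s. (3/2 - s) * (y - 1) powr \<beta>)"
  proof (intro int_mono cont_pw2 continuous_intros)
    fix s :: real assume s: "s \<in> {0..1}"
    show "(3/2 - s) * (y - s) powr \<beta> \<le> (3/2 - s) * (y - 1) powr \<beta>"
      using s assms by (intro mult_left_mono powr_mono2') auto
  qed (use assms in auto)
  moreover have "integral {0..1} (\<lambda>s. (3/2 - s) * (y - 1) powr \<beta>) = (y - 1) powr \<beta>"
    by (subst int_lin[where c = "- ((y - 1) powr \<beta>)" and d = "3/2 * (y - 1) powr \<beta>"]) (auto simp: field_simps)
  ultimately show ?thesis by linarith
qed

lemma IB_ge:
  fixes y \<beta> :: real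
  assumes "y > 1" "\<beta> \<le> 0"
  shows "y powr \<beta> \<le> integral {0..1} (\<lambda>s. (3/2 - s) * (y - s) powr \<beta>)"
proof -
  have "integral {0..1} (\<lambda>s. (3/2 - s) * y powr \<beta>) \<le> integral {0..1} (\<lambda>s. (3/2 - s) * (y - s) powr \<beta>)"
  proof (intro int_mono cont_pw2 continuous_intros)
    fix s :: real assume s: "s \<in> {0..1}"
    show "(3/2 - s) * y powr \<beta> \<le> (3/2 - s) * (y - s) powr \<beta>"
      using s assms by (intro mult_left_mono powr_mono2') auto
  qed (use assms in auto)
  moreover have "integral {0..1} (\<lambda>s. (3/2 - s) * y powr \<beta>) = y powr \<beta>"
    by (subst int_lin[where c = "- (y powr \<beta>)" and d = "3/2 * y powr \<beta>"]) (auto simp: field_simps)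
  ultimately show ?thesis by linarith
qed

lemma IB_shift:
  fixes y \<beta> :: real
  assumes "y > 2" "\<beta> \<le> 0"
  shows "integral {0..1} (\<lambda>s. (3/2 - s) * (y - s) powr \<beta>) \<le> integral {0..1} (\<lambda>s. (3/2 - s) * (y - 1 - s) powr \<beta>)"
proof (intro int_mono cont_pw2 continuous_intros)
  fix s :: real assume s: "s \<in> {0..1}"
  show "(3/2 - s) * (y - s) powr \<beta> \<le> (3/2 - s) * (y - 1 - s) powr \<beta>"
    using s assms by (intro mult_left_mono powr_mono2') auto
qed (use assms in auto)

lemma Mono_gen:
  fixes y \<beta> :: real
  assumes "y > 2" "\<beta> \<le> 0"
  shows "integral {0..1} (\<lambda>s. (s - 1/2) * (y + 1 - s) powr \<beta>) + integral {0..1} (\<lambda>s. (3/2 - s) * (y - s) powr \<beta>)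
       \<le> integral {0..1} (\<lambda>s. (s - 1/2) * (y - s) powr \<beta>) + integral {0..1} (\<lambda>s. (3/2 - s) * (y - 1 - s) powr \<beta>)"
proof -
  have c1: "continuous_on {0..1} (\<lambda>s. (s - 1/2) * (y + 1 - s) powr \<beta>)" using assms by (intro cont_pw) auto
  have c2: "continuous_on {0..1} (\<lambda>s. (3/2 - s) * (y - s) powr \<beta>)" using assms by (intro cont_pw2) auto
  have c3: "continuous_on {0..1} (\<lambda>s. (s - 1/2) * (y - s) powr \<beta>)" using assms by (intro cont_pw) auto
  have c4: "continuous_on {0..1} (\<lambda>s. (3/2 - s) * (y - 1 - s) powr \<beta>)" using assms by (intro cont_pw2) auto
  have "integral {0..1} (\<lambda>s. (s - 1/2) * (y + 1 - s) powr \<beta> + (3/2 - s) * (y - s) powr \<beta>)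
      \<le> integral {0..1} (\<lambda>s. (s - 1/2) * (y - s) powr \<beta> + (3/2 - s) * (y - 1 - s) powr \<beta>)"
  proof (intro int_mono continuous_on_add c1 c2 c3 c4)
    fix s :: real assume s: "s \<in> {0..1}"
    define u where "u = y - 1 - s"
    have u: "u > 0" using s assms unfolding u_def by auto
    have e1: "y + 1 - s = u + 2" "y - s = u + 1" "y - 1 - s = u" unfolding u_def by auto
    have "0 \<le> (s - 1/2) * ((u + 1) powr \<beta> - (u + 2) powr \<beta>) + (3/2 - s) * (u powr \<beta> - (u + 1) powr \<beta>)"
    proof (rule ar3)
      show "0 \<le> (u + 1) powr \<beta> - (u + 2) powr \<beta>" using u assms powr_mono2'[of \<beta> "u+1" "u+2"] by auto
      show "(u + 1) powr \<beta> - (u + 2) powr \<beta> \<le> u powr \<beta> - (u + 1) powr \<beta>"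
        using pw_midconv[OF u assms(2)] by linarith
    qed (use s in auto)
    thus "(s - 1/2) * (y + 1 - s) powr \<beta> + (3/2 - s) * (y - s) powr \<beta>
      \<le> (s - 1/2) * (y - s) powr \<beta> + (3/2 - s) * (y - 1 - s) powr \<beta>"
      unfolding e1 by (simp add: algebra_simps)
  qed
  thus ?thesis
    using integral_add[OF integrable_continuous_interval[OF c1] integrable_continuous_interval[OF c2]]
          integral_add[OF integrable_continuous_interval[OF c3] integrable_continuous_interval[OF c4]]
    by simp
qed



lemma abel:
  fixes C e :: "nat \<Rightarrow> real"
  assumes "1 \<le> n"
  shows "(\<Sum>j=1..n. C j * (e (j-1) - e j)) = C 1 * e 0 - C n * e n + (\<Sum>j=1..n-1. (C (Suc j) - C j) * e j)"
  using assms
proof (induction n rule: nat_induct_at_least)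
  case base
  then show ?case by (simp add: algebra_simps)
next
  case (Suc n)
  have "(\<Sum>j=1..Suc n. C j * (e (j-1) - e j)) = (\<Sum>j=1..n. C j * (e (j-1) - e j)) + C (Suc n) * (e n - e (Suc n))"
    by simp
  also have "\<dots> = C 1 * e 0 - C n * e n + (\<Sum>j=1..n-1. (C (Suc j) - C j) * e j) + C (Suc n) * (e n - e (Suc n))"
    using Suc.IH by simp
  also have "(\<Sum>j=1..Suc n - 1. (C (Suc j) - C j) * e j) = (\<Sum>j=1..n-1. (C (Suc j) - C j) * e j) + (C (Suc n) - C n) * e n"
    using Suc.hyps by (cases n) (simp_all add: sum.cl_ivl_Suc)
  ultimately show ?case by (simp add: algebra_simps)
qed

lemma quad:
  fixes c v :: "nat \<Rightarrow> real" and k :: nat and r :: real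
  assumes k1: "1 \<le> k" and cpos: "0 \<le> c (k-1)"
    and cmono: "\<forall>l. 2 \<le> l \<and> l \<le> k - 1 \<longrightarrow> c l \<le> c (l - 1)"
    and c01: "2 \<le> k \<longrightarrow> c 1 * r\<^sup>2 \<le> c 0 * (r\<^sup>2 - (1 - r)\<^sup>2)"
    and r: "1/2 \<le> r"
  shows "1/2 * (\<Sum>l=0..k-1. c l * ((v (k-l))\<^sup>2 - (v (k-l-1))\<^sup>2))
       \<le> (\<Sum>l=0..k-1. c l * ((v (k-l) - v (k-l-1)) * (r * v k + (1 - r) * v (k-1))))"
proof -
  define w where "w = r * v k + (1 - r) * v (k-1)"
  define e where "e = (\<lambda>j. (v j - w)\<^sup>2 / 2)"
  define C where "C = (\<lambda>j. c (k - j))"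
  have trm: "c l * ((v (k-l) - v (k-l-1)) * w) - 1/2 * (c l * ((v (k-l))\<^sup>2 - (v (k-l-1))\<^sup>2))
       = c l * (e (k-l-1) - e (k-l))" for l
    unfolding e_def by (simp add: power2_eq_square field_simps)
  have "(\<Sum>l=0..k-1. c l * ((v (k-l) - v (k-l-1)) * w)) - 1/2 * (\<Sum>l=0..k-1. c l * ((v (k-l))\<^sup>2 - (v (k-l-1))\<^sup>2))
      = (\<Sum>l=0..k-1. c l * (e (k-l-1) - e (k-l)))"
  proof -
    have "(\<Sum>l=0..k-1. c l * ((v (k-l) - v (k-l-1)) * w)) - 1/2 * (\<Sum>l=0..k-1. c l * ((v (k-l))\<^sup>2 - (v (k-l-1))\<^sup>2))
      = (\<Sum>l=0..k-1. c l * ((v (k-l) - v (k-l-1)) * w) - 1/2 * (c l * ((v (k-l))\<^sup>2 - (v (k-l-1))\<^sup>2)))"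
      by (simp add: sum_distrib_left sum_subtractf)
    also have "\<dots> = (\<Sum>l=0..k-1. c l * (e (k-l-1) - e (k-l)))"
      by (intro sum.cong refl trm)
    finally show ?thesis .
  qed
  also have "\<dots> = (\<Sum>j=1..k. C j * (e (j-1) - e j))"
  proof (rule sum.reindex_bij_witness[of _ "\<lambda>j. k - j" "\<lambda>l. k - l"])
    fix j assume "j \<in> {1..k}" thus "k - (k - j) = j" "k - j \<in> {0..k-1}" by auto
  next
    fix l assume l: "l \<in> {0..k-1}" thus "k - (k - l) = l" "k - l \<in> {1..k}" using k1 by auto
    show "C (k - l) * (e (k - l - 1) - e (k - l)) = c l * (e (k - l - 1) - e (k - l))"
      unfolding C_def using l k1 by (simp add: diff_diff_cancel)
  qed
  also have "\<dots> = C 1 * e 0 - C k * e k + (\<Sum>j=1..k-1. (C (Suc j) - C j) * e j)"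
    by (rule abel[OF k1])
  finally have eq: "(\<Sum>l=0..k-1. c l * ((v (k-l) - v (k-l-1)) * w)) - 1/2 * (\<Sum>l=0..k-1. c l * ((v (k-l))\<^sup>2 - (v (k-l-1))\<^sup>2))
      = C 1 * e 0 - C k * e k + (\<Sum>j=1..k-1. (C (Suc j) - C j) * e j)" .
  define d where "d = v k - v (k-1)"
  have ek: "e k = (1 - r)\<^sup>2 * d\<^sup>2 / 2" unfolding e_def w_def d_def by (simp add: power2_eq_square field_simps)
  have ek1: "e (k-1) = r\<^sup>2 * d\<^sup>2 / 2" unfolding e_def w_def d_def by (simp add: power2_eq_square field_simps)
  have e0: "e j \<ge> 0" for j unfolding e_def by simp
  have "0 \<le> C 1 * e 0 - C k * e k + (\<Sum>j=1..k-1. (C (Suc j) - C j) * e j)"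
  proof (cases "k = 1")
    case True
    have "C 1 * e 0 - C k * e k = c 0 * (e 0 - e 1)" unfolding C_def using True by (simp add: algebra_simps)
    moreover have "e 0 - e 1 = (r\<^sup>2 - (1 - r)\<^sup>2) * d\<^sup>2 / 2" using ek ek1 True by (simp add: field_simps)
    moreover have "0 \<le> (r\<^sup>2 - (1 - r)\<^sup>2) * d\<^sup>2 / 2"
    proof -
      have "r\<^sup>2 - (1 - r)\<^sup>2 = 2 * r - 1" by (simp add: power2_eq_square algebra_simps)
      thus ?thesis using r by simp
    qed
    moreover have "0 \<le> c 0" using cpos True by simp
    ultimately show ?thesis using True by simp
  next
    case False
    hence k2: "2 \<le> k" using k1 by simp
    have split: "(\<Sum>j=1..k-1. (C (Suc j) - C j) * e j) = (\<Sum>j=1..k-2. (C (Suc j) - C j) * e j) + (C k - C (k-1)) * e (k-1)"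
    proof -
      have "{1..k-1} = insert (k-1) {1..k-2}" using k2 by auto
      moreover have "k - 1 \<notin> {1..k-2}" using k2 by auto
      ultimately show ?thesis using k2 by (simp add: Suc_diff_Suc)
    qed
    have s1: "0 \<le> (\<Sum>j=1..k-2. (C (Suc j) - C j) * e j)"
    proof (rule sum_nonneg)
      fix j assume j: "j \<in> {1..k-2}"
      have "2 \<le> k - j \<and> k - j \<le> k - 1" using j k2 by auto
      hence "c (k - j) \<le> c (k - j - 1)" using cmono by blast
      hence "0 \<le> C (Suc j) - C j" unfolding C_def by simp
      thus "0 \<le> (C (Suc j) - C j) * e j" using e0 by simp
    qed
    have s2: "0 \<le> C 1 * e 0" unfolding C_def using cpos e0 by simp
    have "(C k - C (k-1)) * e (k-1) - C k * e k = d\<^sup>2 / 2 * (c 0 * (r\<^sup>2 - (1 - r)\<^sup>2) - c 1 * r\<^sup>2)"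
      unfolding C_def ek ek1 using k2 by (simp add: field_simps)
    moreover have "0 \<le> d\<^sup>2 / 2 * (c 0 * (r\<^sup>2 - (1 - r)\<^sup>2) - c 1 * r\<^sup>2)"
      using c01 k2 by simp
    ultimately show ?thesis using split s1 s2 by linarith
  qed
  with eq show ?thesis unfolding w_def by linarith
qed



lemma ca1: "coef_a \<alpha> \<sigma> \<tau> k 1 = 3/2 * \<tau> powr (2-\<alpha>) * integral {0..1/2} (\<lambda>s. (s - 1/3) * (real k + \<sigma> - s) powr (1-\<alpha>))"
  by (simp add: coef_a_def)

lemma ca: "l \<noteq> 1 \<Longrightarrow> A = real k + \<sigma> - real l + 3/2 \<Longrightarrow>
  coef_a \<alpha> \<sigma> \<tau> k l = \<tau> powr (2-\<alpha>) * integral {0..1} (\<lambda>s. (s - 1/2) * (A - s) powr (1-\<alpha>))"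
  by (simp add: coef_a_def)

lemma cb: "l \<noteq> k \<Longrightarrow> A = real k + \<sigma> - real l + 1/2 \<Longrightarrow>
  coef_b \<alpha> \<sigma> \<tau> k l = \<tau> powr (2-\<alpha>) * integral {0..1} (\<lambda>s. (3/2 - s) * (A - s) powr (1-\<alpha>))"
  by (simp add: coef_b_def)

lemma cbk:
  assumes "\<alpha> < 2" "0 \<le> \<sigma> + 1/2"
  shows "coef_b \<alpha> \<sigma> \<tau> k k = \<tau> powr (2-\<alpha>) * ((\<sigma> + 1/2) powr (2-\<alpha>) / (2-\<alpha>))"
proof -
  have e: "1 - \<alpha> + 1 = 2 - \<alpha>" by simp
  have "((\<lambda>s. s powr (1-\<alpha>)) has_integral ((\<sigma> + 1/2) powr (2-\<alpha>) / (2-\<alpha>))) {0..\<sigma> + 1/2}"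
    using has_integral_powr_from_0[of "1-\<alpha>" "\<sigma> + 1/2"] assms unfolding e by simp
  hence "integral {0..\<sigma> + 1/2} (\<lambda>s. s powr (1-\<alpha>)) = (\<sigma> + 1/2) powr (2-\<alpha>) / (2-\<alpha>)"
    by (rule integral_unique)
  thus ?thesis by (simp add: coef_b_def)
qed

lemma cc: "l < k \<Longrightarrow> coef_c \<alpha> \<sigma> \<tau> k l = coef_a \<alpha> \<sigma> \<tau> k (k-l) + coef_b \<alpha> \<sigma> \<tau> k (k-l)"
  by (simp add: coef_c_def)

lemma a1_le:
  assumes "1 < \<alpha>" "\<alpha> < 2" "real k + \<sigma> \<ge> 1"
  shows "coef_a \<alpha> \<sigma> \<tau> k 1 \<le> 0"
proof -
  have "integral {0..1/2} (\<lambda>s. (s - 1/3) * (real k + \<sigma> - s) powr (1-\<alpha>)) \<le> 0"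
    using assms by (intro IA1_le) auto
  moreover have "0 \<le> 3/2 * \<tau> powr (2-\<alpha>)" by simp
  ultimately show ?thesis unfolding ca1 by (rule mult_nonneg_nonpos[rotated])
qed

lemma R1:
  assumes a1: "1 < \<alpha>" and a2: "\<alpha> < 2" and s: "\<sigma> = 1 - \<alpha>/2" and t: "\<tau> > 0" and k: "1 \<le> k"
  shows "0 \<le> coef_c \<alpha> \<sigma> \<tau> k (k-1)"
proof -
  define T where "T = \<tau> powr (2-\<alpha>)"
  define x where "x = real k + \<sigma>"
  have T: "T > 0" unfolding T_def using t by simp
  have kk: "k - (k-1) = 1" using k by simp
  have c: "coef_c \<alpha> \<sigma> \<tau> k (k-1) = coef_a \<alpha> \<sigma> \<tau> k 1 + coef_b \<alpha> \<sigma> \<tau> k 1"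
    using k by (simp add: cc kk)
  have I: "- ((x - 1/3) powr (1-\<alpha>)) / 24 \<le> integral {0..1/2} (\<lambda>s. (s - 1/3) * (x - s) powr (1-\<alpha>))"
    using a1 a2 s k unfolding x_def by (intro IA1_ge) auto
  have A: "- T * (x - 1/3) powr (1-\<alpha>) / 16 \<le> coef_a \<alpha> \<sigma> \<tau> k 1"
  proof -
    have "3/2 * T * (- ((x - 1/3) powr (1-\<alpha>)) / 24) \<le> 3/2 * T * integral {0..1/2} (\<lambda>s. (s - 1/3) * (x - s) powr (1-\<alpha>))"
      using I T by (intro mult_left_mono) auto
    thus ?thesis unfolding ca1 T_def x_def by simp
  qed
  show ?thesis
  proof (cases "k = 1")
    case True
    define q where "q = \<sigma> + 1/2"
    have q: "1/2 < q" "q \<le> 1" using s a1 a2 unfolding q_def by auto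
    have B: "coef_b \<alpha> \<sigma> \<tau> k 1 = T * (q powr (2-\<alpha>) / (2-\<alpha>))"
      using cbk[of \<alpha> \<sigma> \<tau> 1] True a2 q unfolding T_def q_def by simp
    have "q powr 1 \<le> q powr (2-\<alpha>)" using q a1 a2 by (intro powr_mono') auto
    hence q1: "1/2 \<le> q powr (2-\<alpha>)" using q by simp
    have "q powr (2-\<alpha>) / 1 \<le> q powr (2-\<alpha>) / (2-\<alpha>)" using a1 a2 by (intro divide_left_mono) auto
    hence q2: "1/2 \<le> q powr (2-\<alpha>) / (2-\<alpha>)" using q1 by linarith
    have "(x - 1/3) powr (1-\<alpha>) \<le> 2" using True s a1 a2 unfolding x_def by (intro half_pw_le2) auto
    hence "T * (x - 1/3) powr (1-\<alpha>) / 16 \<le> T * (q powr (2-\<alpha>) / (2-\<alpha>))"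
    proof -
      have "T * (x - 1/3) powr (1-\<alpha>) \<le> T * 2" using T \<open>(x - 1/3) powr (1-\<alpha>) \<le> 2\<close> by (intro mult_left_mono) auto
      moreover have "T * (1/2) \<le> T * (q powr (2-\<alpha>) / (2-\<alpha>))" using T q2 by (intro mult_left_mono) auto
      ultimately show ?thesis using T by linarith
    qed
    thus ?thesis using c A B by linarith
  next
    case False
    hence k2: "2 \<le> k" using k by simp
    have B0: "coef_b \<alpha> \<sigma> \<tau> k 1 = T * integral {0..1} (\<lambda>s. (3/2 - s) * (x - 1/2 - s) powr (1-\<alpha>))"
      using False unfolding T_def x_def by (intro cb) auto
    have "(x - 1/2) powr (1-\<alpha>) \<le> integral {0..1} (\<lambda>s. (3/2 - s) * (x - 1/2 - s) powr (1-\<alpha>))"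
      using k2 s a1 a2 unfolding x_def by (intro IB_ge) auto
    moreover have "(x - 1/3) powr (1-\<alpha>) \<le> (x - 1/2) powr (1-\<alpha>)"
      using k2 s a1 a2 unfolding x_def by (intro powr_mono2') auto
    ultimately have "T * (x - 1/3) powr (1-\<alpha>) \<le> coef_b \<alpha> \<sigma> \<tau> k 1"
      unfolding B0 using T by (intro mult_left_mono) auto
    moreover have "0 \<le> T * (x - 1/3) powr (1-\<alpha>)" using T by simp
    ultimately show ?thesis using c A by linarith
  qed
qed


lemma R2:
  assumes a1: "1 < \<alpha>" and a2: "\<alpha> < 2" and s: "\<sigma> = 1 - \<alpha>/2" and t: "\<tau> > 0"
    and l2: "2 \<le> l" and lk: "l \<le> k - 1"
  shows "coef_c \<alpha> \<sigma> \<tau> k l \<le> coef_c \<alpha> \<sigma> \<tau> k (l - 1)"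
proof -
  define T where "T = \<tau> powr (2-\<alpha>)"
  have T: "T > 0" unfolding T_def using t by simp
  define j where "j = k - l"
  have k3: "3 \<le> k" using l2 lk by simp
  have j1: "1 \<le> j" "j \<le> k - 2" using l2 lk unfolding j_def by auto
  have jj: "k - (l - 1) = Suc j" using l2 lk unfolding j_def by simp
  have c1: "coef_c \<alpha> \<sigma> \<tau> k l = coef_a \<alpha> \<sigma> \<tau> k j + coef_b \<alpha> \<sigma> \<tau> k j"
    using l2 lk unfolding j_def by (intro cc) simp
  have c2: "coef_c \<alpha> \<sigma> \<tau> k (l - 1) = coef_a \<alpha> \<sigma> \<tau> k (Suc j) + coef_b \<alpha> \<sigma> \<tau> k (Suc j)"
    using l2 lk cc[of "l-1" k \<alpha> \<sigma> \<tau>] jj by simp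
  define y where "y = real k + \<sigma> - real j + 1/2"
  have y2: "y > 2"
  proof -
    have "real j + 2 \<le> real k" using j1 k3 by linarith
    thus ?thesis unfolding y_def using s a2 by simp
  qed
  have bj: "coef_b \<alpha> \<sigma> \<tau> k j = T * integral {0..1} (\<lambda>s. (3/2 - s) * (y - s) powr (1-\<alpha>))"
    using j1 k3 unfolding T_def y_def by (intro cb) auto
  have aj1: "coef_a \<alpha> \<sigma> \<tau> k (Suc j) = T * integral {0..1} (\<lambda>s. (s - 1/2) * (y - s) powr (1-\<alpha>))"
    using j1 unfolding T_def y_def by (intro ca) auto
  have bj1: "coef_b \<alpha> \<sigma> \<tau> k (Suc j) = T * integral {0..1} (\<lambda>s. (3/2 - s) * (y - 1 - s) powr (1-\<alpha>))"
    using j1 k3 unfolding T_def y_def by (intro cb) auto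
  show ?thesis
  proof (cases "j = 1")
    case True
    have "coef_a \<alpha> \<sigma> \<tau> k 1 \<le> 0" using a1 a2 s k3 by (intro a1_le) auto
    hence "coef_a \<alpha> \<sigma> \<tau> k j \<le> 0" using True by simp
    moreover have "integral {0..1} (\<lambda>s. (3/2 - s) * (y - s) powr (1-\<alpha>))
        \<le> integral {0..1} (\<lambda>s. (s - 1/2) * (y - s) powr (1-\<alpha>)) + integral {0..1} (\<lambda>s. (3/2 - s) * (y - 1 - s) powr (1-\<alpha>))"
      using IB_shift[of y "1-\<alpha>"] IA_ge[of y "1-\<alpha>"] y2 a1 by linarith
    hence "coef_b \<alpha> \<sigma> \<tau> k j \<le> coef_a \<alpha> \<sigma> \<tau> k (Suc j) + coef_b \<alpha> \<sigma> \<tau> k (Suc j)"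
      unfolding bj aj1 bj1 using T by (simp add: distrib_left[symmetric] mult_left_mono)
    ultimately show ?thesis using c1 c2 by linarith
  next
    case False
    have aj: "coef_a \<alpha> \<sigma> \<tau> k j = T * integral {0..1} (\<lambda>s. (s - 1/2) * (y + 1 - s) powr (1-\<alpha>))"
      using False unfolding T_def y_def by (intro ca) auto
    have "integral {0..1} (\<lambda>s. (s - 1/2) * (y + 1 - s) powr (1-\<alpha>)) + integral {0..1} (\<lambda>s. (3/2 - s) * (y - s) powr (1-\<alpha>))
       \<le> integral {0..1} (\<lambda>s. (s - 1/2) * (y - s) powr (1-\<alpha>)) + integral {0..1} (\<lambda>s. (3/2 - s) * (y - 1 - s) powr (1-\<alpha>))"
      using y2 a1 by (intro Mono_gen) auto
    hence "coef_a \<alpha> \<sigma> \<tau> k j + coef_b \<alpha> \<sigma> \<tau> k j \<le> coef_a \<alpha> \<sigma> \<tau> k (Suc j) + coef_b \<alpha> \<sigma> \<tau> k (Suc j)"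
      unfolding aj bj aj1 bj1 using T by (simp add: distrib_left[symmetric] mult_left_mono)
    thus ?thesis using c1 c2 by linarith
  qed
qed

lemma R3:
  assumes a1: "1 < \<alpha>" and a2: "\<alpha> < 2" and s: "\<sigma> = 1 - \<alpha>/2" and t: "\<tau> > 0" and k2: "2 \<le> k"
  shows "coef_c \<alpha> \<sigma> \<tau> k 1 * (1/2 + \<sigma>)\<^sup>2 \<le> coef_c \<alpha> \<sigma> \<tau> k 0 * ((1/2 + \<sigma>)\<^sup>2 - (1 - (1/2 + \<sigma>))\<^sup>2)"
proof -
  define T where "T = \<tau> powr (2-\<alpha>)"
  have T: "T > 0" unfolding T_def using t by simp
  define q where "q = \<sigma> + 1/2"
  define \<beta> where "\<beta> = 1 - \<alpha>"
  have q: "1/2 < q" "q < 1" using s a1 a2 unfolding q_def by auto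
  have c0: "coef_c \<alpha> \<sigma> \<tau> k 0 = coef_a \<alpha> \<sigma> \<tau> k k + coef_b \<alpha> \<sigma> \<tau> k k" using k2 cc[of 0 k] by simp
  have c1: "coef_c \<alpha> \<sigma> \<tau> k 1 = coef_a \<alpha> \<sigma> \<tau> k (k-1) + coef_b \<alpha> \<sigma> \<tau> k (k-1)" using k2 cc[of 1 k] by simp
  have ak: "coef_a \<alpha> \<sigma> \<tau> k k = T * integral {0..1} (\<lambda>s. (s - 1/2) * (q + 1 - s) powr (1-\<alpha>))"
    using k2 unfolding T_def q_def by (intro ca) auto
  have ak0: "0 \<le> coef_a \<alpha> \<sigma> \<tau> k k" unfolding ak using T q a1 by (intro mult_nonneg_nonneg IA_ge) auto
  have bk: "coef_b \<alpha> \<sigma> \<tau> k k = T * (q powr (2-\<alpha>) / (2-\<alpha>))"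
    using cbk[of \<alpha> \<sigma> \<tau> k] a2 q unfolding T_def q_def by simp
  have lhs: "T * q powr (2-\<alpha>) \<le> coef_c \<alpha> \<sigma> \<tau> k 0 * (2 - \<alpha>)"
  proof -
    have "coef_b \<alpha> \<sigma> \<tau> k k * (2 - \<alpha>) = T * q powr (2-\<alpha>)" unfolding bk using a2 by simp
    moreover have "0 \<le> coef_a \<alpha> \<sigma> \<tau> k k * (2 - \<alpha>)" using ak0 a2 by simp
    ultimately show ?thesis unfolding c0 by (simp add: distrib_right)
  qed
  have bk1: "coef_b \<alpha> \<sigma> \<tau> k (k-1) = T * integral {0..1} (\<lambda>s. (3/2 - s) * (q + 1 - s) powr (1-\<alpha>))"
    using k2 unfolding T_def q_def by (intro cb) (auto simp: of_nat_diff)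
  have "integral {0..1} (\<lambda>s. (3/2 - s) * (q + 1 - s) powr (1-\<alpha>)) \<le> (q + 1 - 1) powr (1-\<alpha>)"
    using q a1 by (intro IB_le) auto
  hence bk1le: "coef_b \<alpha> \<sigma> \<tau> k (k-1) \<le> T * q powr \<beta>"
    unfolding bk1 \<beta>_def using T by (intro mult_left_mono) auto
  have ak1le: "coef_a \<alpha> \<sigma> \<tau> k (k-1) \<le> T * (- \<beta> / 4)"
  proof (cases "k = 2")
    case True
    have "coef_a \<alpha> \<sigma> \<tau> k 1 \<le> 0" using True a1 a2 s by (intro a1_le) auto
    hence "coef_a \<alpha> \<sigma> \<tau> k (k-1) \<le> 0" using True by simp
    moreover have "0 \<le> T * (- \<beta> / 4)" using T a1 unfolding \<beta>_def by simp
    ultimately show ?thesis by linarith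
  next
    case False
    have e: "coef_a \<alpha> \<sigma> \<tau> k (k-1) = T * integral {0..1} (\<lambda>s. (s - 1/2) * (q + 2 - s) powr (1-\<alpha>))"
      using k2 False unfolding T_def q_def by (intro ca) (auto simp: of_nat_diff)
    have "integral {0..1} (\<lambda>s. (s - 1/2) * (q + 2 - s) powr (1-\<alpha>)) \<le> ((q + 2 - 1) powr (1-\<alpha>) - (q + 2) powr (1-\<alpha>)) / 4"
      using q a1 by (intro IA_le) auto
    moreover have "(q + 1) powr (1-\<alpha>) - (q + 1 + 1) powr (1-\<alpha>) \<le> - (1 - \<alpha>)"
      using q a1 by (intro pw_bern) auto
    moreover have "q + 2 - 1 = q + 1" "q + 1 + 1 = q + 2" by simp_all
    ultimately have "integral {0..1} (\<lambda>s. (s - 1/2) * (q + 2 - s) powr (1-\<alpha>)) \<le> - \<beta> / 4"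
      unfolding \<beta>_def by simp
    thus ?thesis unfolding e using T by (intro mult_left_mono) auto
  qed
  have c1le: "coef_c \<alpha> \<sigma> \<tau> k 1 \<le> T * (q powr \<beta> + (- \<beta> / 4))"
  proof -
    have "T * (q powr \<beta> + (- \<beta> / 4)) = T * q powr \<beta> + T * (- \<beta> / 4)" by (rule distrib_left)
    thus ?thesis unfolding c1 using bk1le ak1le by linarith
  qed
  have qb: "1 \<le> q powr \<beta>" using q a1 powr_mono2'[of \<beta> q 1] unfolding \<beta>_def by simp
  have qp: "q powr (2-\<alpha>) = q powr \<beta> * q" unfolding \<beta>_def
    using q powr_add[of q "1-\<alpha>" 1] by simp
  have key: "(q powr \<beta> + (- \<beta> / 4)) * q\<^sup>2 \<le> q powr (2-\<alpha>)"
  proof -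
    have mb: "- \<beta> = 2 * (1 - q)" unfolding \<beta>_def q_def s by simp
    have "0 \<le> q * (1 - q) * (q powr \<beta> - q / 2)" using q qb by (intro mult_nonneg_nonneg) auto
    moreover have "q powr (2-\<alpha>) - (q powr \<beta> + (- \<beta> / 4)) * q\<^sup>2 = q * (1 - q) * (q powr \<beta> - q / 2)"
      unfolding qp mb by (simp add: power2_eq_square field_simps)
    ultimately show ?thesis by linarith
  qed
  have "coef_c \<alpha> \<sigma> \<tau> k 1 * (1/2 + \<sigma>)\<^sup>2 \<le> T * (q powr \<beta> + (- \<beta> / 4)) * q\<^sup>2"
  proof -
    have "1/2 + \<sigma> = q" unfolding q_def by simp
    thus ?thesis using c1le by (simp add: mult_right_mono)
  qed
  also have "\<dots> \<le> T * q powr (2-\<alpha>)" using key T by (simp add: mult.assoc mult_left_mono)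
  also have "\<dots> \<le> coef_c \<alpha> \<sigma> \<tau> k 0 * (2 - \<alpha>)" by (rule lhs)
  also have "(2 - \<alpha>) = (1/2 + \<sigma>)\<^sup>2 - (1 - (1/2 + \<sigma>))\<^sup>2" unfolding s by (simp add: power2_eq_square algebra_simps)
  finally show ?thesis .
qed



lemma swap_lem:
  fixes c :: "nat \<Rightarrow> real" and F :: "nat \<Rightarrow> nat \<Rightarrow> real"
  shows "(\<Sum>l\<in>A. c l * (h * (\<Sum>i\<in>B. F l i))) = h * (\<Sum>i\<in>B. \<Sum>l\<in>A. c l * F l i)"
proof -
  have "(\<Sum>l\<in>A. c l * (h * (\<Sum>i\<in>B. F l i))) = (\<Sum>l\<in>A. \<Sum>i\<in>B. h * (c l * F l i))"
    by (simp add: sum_distrib_left mult_ac)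
  also have "\<dots> = (\<Sum>i\<in>B. \<Sum>l\<in>A. h * (c l * F l i))" by (rule sum.swap)
  also have "\<dots> = h * (\<Sum>i\<in>B. \<Sum>l\<in>A. c l * F l i)" by (simp add: sum_distrib_left)
  finally show ?thesis .
qed

theorem lemma3:
  fixes L \<alpha> \<sigma> \<tau> h :: real and M k :: nat and u :: "nat \<Rightarrow> nat \<Rightarrow> real"
  assumes "L > 0" and "M > 0" and "h = L / real M"
    and "1 < \<alpha>" and "\<alpha> < 2" and "\<sigma> = 1 - \<alpha> / 2" and "\<tau> > 0" and "k \<ge> 1"
    and "\<forall>j \<le> k + 1. u j 0 = 0 \<and> u j M = 0"
  shows "(\<Sum>l = 0..k - 1. coef_c \<alpha> \<sigma> \<tau> k l *
            grid_inner h M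
              (\<lambda>i. delta_t \<tau> u (k - l) i - delta_t \<tau> u (k - l - 1) i)
              (\<lambda>i. (1/2 + \<sigma>) * delta_t \<tau> u k i + (1/2 - \<sigma>) * delta_t \<tau> u (k - 1) i))
         \<ge> 1/2 * (\<Sum>l = 0..k - 1. coef_c \<alpha> \<sigma> \<tau> k l *
            ((grid_norm h M (delta_t \<tau> u (k - l)))\<^sup>2 - (grid_norm h M (delta_t \<tau> u (k - l - 1)))\<^sup>2))"
proof -
  define c where "c = coef_c \<alpha> \<sigma> \<tau> k"
  define r where "r = 1/2 + \<sigma>"
  have r1: "1/2 - \<sigma> = 1 - r" unfolding r_def by simp
  have h0: "h > 0" using assms(1,2,3) by simp
  have nrm: "(grid_norm h M f)\<^sup>2 = h * (\<Sum>i=1..M-1. (f i)\<^sup>2)" for f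
  proof -
    have "0 \<le> (\<Sum>i=1..M-1. f i * f i)" by (rule sum_nonneg) simp
    hence "0 \<le> h * (\<Sum>i=1..M-1. f i * f i)" using h0 by simp
    thus ?thesis unfolding grid_norm_def grid_inner_def by (simp add: power2_eq_square)
  qed
  have cpos: "0 \<le> c (k-1)" unfolding c_def using assms by (intro R1) auto
  have cmono: "\<forall>l. 2 \<le> l \<and> l \<le> k - 1 \<longrightarrow> c l \<le> c (l - 1)" unfolding c_def using assms R2 by blast
  have c01: "2 \<le> k \<longrightarrow> c 1 * r\<^sup>2 \<le> c 0 * (r\<^sup>2 - (1 - r)\<^sup>2)" unfolding c_def r_def using assms R3 by blast
  have rh: "1/2 \<le> r" unfolding r_def using assms by simp
  have Q: "1/2 * (\<Sum>l=0..k-1. c l * ((delta_t \<tau> u (k-l) i)\<^sup>2 - (delta_t \<tau> u (k-l-1) i)\<^sup>2))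
       \<le> (\<Sum>l=0..k-1. c l * ((delta_t \<tau> u (k-l) i - delta_t \<tau> u (k-l-1) i) * (r * delta_t \<tau> u k i + (1 - r) * delta_t \<tau> u (k-1) i)))" for i
    using quad[OF assms(8) cpos cmono c01 rh, of "\<lambda>j. delta_t \<tau> u j i"] by simp
  have LHS: "(\<Sum>l = 0..k - 1. c l * grid_inner h M
              (\<lambda>i. delta_t \<tau> u (k - l) i - delta_t \<tau> u (k - l - 1) i)
              (\<lambda>i. r * delta_t \<tau> u k i + (1 - r) * delta_t \<tau> u (k - 1) i))
     = h * (\<Sum>i=1..M-1. \<Sum>l=0..k-1. c l * ((delta_t \<tau> u (k-l) i - delta_t \<tau> u (k-l-1) i) * (r * delta_t \<tau> u k i + (1 - r) * delta_t \<tau> u (k-1) i)))"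
    unfolding grid_inner_def by (rule swap_lem)
  have RHS: "1/2 * (\<Sum>l = 0..k - 1. c l *
            ((grid_norm h M (delta_t \<tau> u (k - l)))\<^sup>2 - (grid_norm h M (delta_t \<tau> u (k - l - 1)))\<^sup>2))
     = h * (\<Sum>i=1..M-1. 1/2 * (\<Sum>l=0..k-1. c l * ((delta_t \<tau> u (k-l) i)\<^sup>2 - (delta_t \<tau> u (k-l-1) i)\<^sup>2)))"
  proof -
    have "(\<Sum>l = 0..k - 1. c l *
            ((grid_norm h M (delta_t \<tau> u (k - l)))\<^sup>2 - (grid_norm h M (delta_t \<tau> u (k - l - 1)))\<^sup>2))
       = (\<Sum>l = 0..k - 1. c l * (h * (\<Sum>i=1..M-1. (delta_t \<tau> u (k-l) i)\<^sup>2 - (delta_t \<tau> u (k-l-1) i)\<^sup>2)))"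
      unfolding nrm by (simp add: right_diff_distrib sum_subtractf)
    also have "\<dots> = h * (\<Sum>i=1..M-1. \<Sum>l=0..k-1. c l * ((delta_t \<tau> u (k-l) i)\<^sup>2 - (delta_t \<tau> u (k-l-1) i)\<^sup>2))"
      by (rule swap_lem)
    finally show ?thesis by (simp add: sum_distrib_left mult_ac)
  qed
  have "h * (\<Sum>i=1..M-1. 1/2 * (\<Sum>l=0..k-1. c l * ((delta_t \<tau> u (k-l) i)\<^sup>2 - (delta_t \<tau> u (k-l-1) i)\<^sup>2)))
     \<le> h * (\<Sum>i=1..M-1. \<Sum>l=0..k-1. c l * ((delta_t \<tau> u (k-l) i - delta_t \<tau> u (k-l-1) i) * (r * delta_t \<tau> u k i + (1 - r) * delta_t \<tau> u (k-1) i)))"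
    using h0 Q by (intro mult_left_mono sum_mono) auto
  hence "1/2 * (\<Sum>l = 0..k - 1. c l *
            ((grid_norm h M (delta_t \<tau> u (k - l)))\<^sup>2 - (grid_norm h M (delta_t \<tau> u (k - l - 1)))\<^sup>2))
      \<le> (\<Sum>l = 0..k - 1. c l * grid_inner h M
              (\<lambda>i. delta_t \<tau> u (k - l) i - delta_t \<tau> u (k - l - 1) i)
              (\<lambda>i. r * delta_t \<tau> u k i + (1 - r) * delta_t \<tau> u (k - 1) i))"
    unfolding LHS RHS .
  thus ?thesis unfolding c_def r1[symmetric] r_def by simp
qed

end
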